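(* Let $\gamma$ be an orbit of the regularized planar two-center problem lying on a regular torus $\mathbb{T}$ with rotation number $W$. If $\gamma$ passes through collision points at two distinct times (i.e. $\gamma$ contains an orbit segment connecting two collisions), then $W$ is rational.
   Context: Fix $d>0$ and masses $m_1,m_2>0$ at $(-d,0)$ and $(d,0)$. A test particle moves with Hamiltonian $H=\tfrac12(p_x^2+p_y^2)-m_1/\sqrt{(x+d)^2+y^2}-m_2/\sqrt{(x-d)^2+y^2}$; energies $h<0$. Regularization: $(\lambda,\nu)\in\mathbb{R}\times(\mathbb{R}/2\pi\mathbb{Z})$ with $x+iy=d\sin(\nu+i\lambda)$ (a double cover branched over the centers), conjugate momenta $p_\lambda,p_\nu$, time change $dt=d^2(\cosh^2\lambda-\sin^2\nu)\,d\tau$. On $H=h$ the motion becomes the flow (time $\tau$, defined also through collisions) of $H_\lambda+H_\nu$ on its zero level, $H_\lambda=\tfrac12p_\lambda^2-d(m_1+m_2)\cosh\lambda-hd^2\cosh^2\lambda$, $H_\nu=\tfrac12p_\nu^2+d(m_1-m_2)\sin\nu+hd^2\sin^2\nu$; orbits lie in sets $\{H_\lambda=-g,\ H_\nu=g\}$ for a separation constant $g$. Regular torus: a compact connected component $\mathbb{T}=C_\lambda\times C_\nu$ of such a set with $-g$ a regular value of $H_\lambda$ and $g$ a regular value of $H_\nu$ ($C_\lambda$ a closed curve in the $(\lambda,p_\lambda)$-plane, $C_\nu$ a closed curve in the cylinder $(\mathbb{R}/2\pi\mathbb{Z})\times\mathbb{R}$). Rotation number $W=T_\nu/T_\lambda$,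 where $T_\lambda,T_\nu$ are the $\tau$-periods of the motions on $C_\lambda,C_\nu$; in angle coordinates $\theta_1$ along $C_\nu$, $\theta_2$ along $C_\lambda$ (each in $\mathbb{R}/\mathbb{Z}$, increasing uniformly in $\tau$ with period 1) orbits on $\mathbb{T}$ lift to lines $\theta_2=W\theta_1+\mathrm{const}$. Collision points are the points of $\mathbb{T}$ with $\lambda=0$ and $\nu\equiv\pm\pi/2 \pmod{2\pi}$ (they project to the two centers). *)

theory Defs
  imports "HOL-Analysis.Analysis"
begin

definition Hlam :: "real \<Rightarrow> real \<Rightarrow> real \<Rightarrow> real \<Rightarrow> real \<times> real \<Rightarrow> real" where
  "Hlam d m1 m2 h = (\<lambda>(l, p). p^2 / 2 - d * (m1 + m2) * cosh l - h * d^2 * (cosh l)^2)"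

definition Hnu :: "real \<Rightarrow> real \<Rightarrow> real \<Rightarrow> real \<Rightarrow> real \<times> real \<Rightarrow> real" where
  "Hnu d m1 m2 h = (\<lambda>(v, p). p^2 / 2 + d * (m1 - m2) * sin v + h * d^2 * (sin v)^2)"

text \<open>The cylinder \<open>(\<real>/2\<pi>\<int>) \<times> \<real>\<close> realised as \<open>S\<^sup>1 \<times> \<real> \<subseteq> \<real>\<^sup>3\<close>;
  \<open>cyl_map\<close> is the covering map from the lift.\<close>

definition cyl_map :: "real \<times> real \<Rightarrow> real \<times> real \<times> real" where
  "cyl_map = (\<lambda>(v, p). (cos v, sin v, p))"

definition regular_value :: "(real \<times> real \<Rightarrow> real) \<Rightarrow> real \<Rightarrow> bool" where
  "regular_value f c \<longleftrightarrow>
     (\<forall>x. f x = c \<longrightarrow> (\<exists>D. (f has_derivative D) (at x) \<and> D \<noteq> (\<lambda>_. 0)))"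

text \<open>Orbit of the regularized flow (time \<open>\<tau>\<close>) of \<open>H\<^sub>\<lambda> + H\<^sub>\<nu>\<close>, with \<open>\<nu>\<close> lifted to \<open>\<real>\<close>:
  Hamilton's equations, defined for all \<open>\<tau>\<close>.\<close>

definition reg_orbit :: "real \<Rightarrow> real \<Rightarrow> real \<Rightarrow> real \<Rightarrow>
    (real \<Rightarrow> real) \<Rightarrow> (real \<Rightarrow> real) \<Rightarrow> (real \<Rightarrow> real) \<Rightarrow> (real \<Rightarrow> real) \<Rightarrow> bool" where
  "reg_orbit d m1 m2 h l pl v pv \<longleftrightarrow>
     (\<forall>\<tau>. (l has_real_derivative pl \<tau>) (at \<tau>)
        \<and> (pl has_real_derivative
             (d * (m1 + m2) * sinh (l \<tau>) + 2 * h * d^2 * cosh (l \<tau>) * sinh (l \<tau>))) (at \<tau>)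
        \<and> (v has_real_derivative pv \<tau>) (at \<tau>)
        \<and> (pv has_real_derivative
             (- d * (m1 - m2) * cos (v \<tau>) - 2 * h * d^2 * sin (v \<tau>) * cos (v \<tau>))) (at \<tau>))"

definition min_period :: "(real \<Rightarrow> 'a) \<Rightarrow> real" where
  "min_period f = (THE T. 0 < T \<and> (\<forall>t. f (t + T) = f t) \<and>
                         (\<forall>S. 0 < S \<and> S < T \<longrightarrow> \<not> (\<forall>t. f (t + S) = f t)))"

definition rot_number :: "(real \<Rightarrow> real) \<Rightarrow> (real \<Rightarrow> real) \<Rightarrow> (real \<Rightarrow> real) \<Rightarrow> (real \<Rightarrow> real) \<Rightarrow> real" where
  "rot_number l pl v pv =
     min_period (\<lambda>\<tau>. cyl_map (v \<tau>, pv \<tau>)) / min_period (\<lambda>\<tau>. (l \<tau>, pl \<tau>))"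

definition collision :: "real \<Rightarrow> real \<Rightarrow> bool" where
  "collision l v \<longleftrightarrow> l = 0 \<and> (\<exists>k::int. v = pi/2 + 2 * pi * k \<or> v = - pi/2 + 2 * pi * k)"

end

theory Submission
  imports Defs
begin


lemma two_ab_le: "\<bar>2*a*b\<bar> \<le> a^2 + (b::real)^2"
proof -
  have "0 \<le> (\<bar>a\<bar> - \<bar>b\<bar>)^2" by simp
  then show ?thesis by (simp add: power2_eq_square algebra_simps abs_mult)
qed

lemma ode_unique:
  fixes x1 p1 x2 p2 F :: "real \<Rightarrow> real" and L s t :: real
  assumes d1: "\<And>t. (x1 has_real_derivative p1 t) (at t)"
    and d2: "\<And>t. (p1 has_real_derivative F (x1 t)) (at t)"
    and d3: "\<And>t. (x2 has_real_derivative p2 t) (at t)"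
    and d4: "\<And>t. (p2 has_real_derivative F (x2 t)) (at t)"
    and lip: "\<And>t. \<bar>F (x1 t) - F (x2 t)\<bar> \<le> L * \<bar>x1 t - x2 t\<bar>"
    and i1: "x1 s = x2 s" and i2: "p1 s = p2 s"
  shows "x1 t = x2 t \<and> p1 t = p2 t"
proof -
  define e where "e = (\<lambda>t. (x1 t - x2 t)^2 + (p1 t - p2 t)^2)"
  define E where "E = (\<lambda>t. 2*(x1 t - x2 t)*(p1 t - p2 t) + 2*(p1 t - p2 t)*(F (x1 t) - F (x2 t)))"
  define K where "K = 1 + \<bar>L\<bar>"
  have de: "(e has_real_derivative E t) (at t)" for t
    unfolding e_def E_def
    by (rule derivative_eq_intros d1 d2 d3 d4 refl | simp)+ (simp add: algebra_simps)
  have e0: "e t \<ge> 0" for t unfolding e_def by simp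
  have es: "e s = 0" unfolding e_def using i1 i2 by simp
  have bnd: "\<bar>E t\<bar> \<le> K * e t" for t
  proof -
    let ?a = "x1 t - x2 t" and ?b = "p1 t - p2 t"
    have h1: "\<bar>2*?a*?b\<bar> \<le> ?a^2 + ?b^2"
      by (rule two_ab_le)
    have "\<bar>2*?b*(F (x1 t) - F (x2 t))\<bar> = 2*\<bar>?b\<bar>*\<bar>F (x1 t) - F (x2 t)\<bar>" by (simp only: abs_mult)
    also have "\<dots> \<le> 2*\<bar>?b\<bar>*(\<bar>L\<bar>*\<bar>?a\<bar>)"
    proof (intro mult_left_mono)
      have "L * \<bar>?a\<bar> \<le> \<bar>L\<bar> * \<bar>?a\<bar>" by (intro mult_right_mono) auto
      then show "\<bar>F (x1 t) - F (x2 t)\<bar> \<le> \<bar>L\<bar> * \<bar>?a\<bar>" using lip[of t] by linarith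
    qed simp
    also have "\<dots> = \<bar>L\<bar> * \<bar>2*?a*?b\<bar>" by (simp only: abs_mult abs_numeral mult_ac)
    also have "\<dots> \<le> \<bar>L\<bar> * (?a^2 + ?b^2)" using h1 by (intro mult_left_mono) auto
    finally have h2: "\<bar>2*?b*(F (x1 t) - F (x2 t))\<bar> \<le> \<bar>L\<bar> * (?a^2 + ?b^2)" .
    show ?thesis unfolding E_def e_def K_def using h1 h2 by (simp add: algebra_simps)
  qed
  have "e t = 0"
  proof (cases "s \<le> t")
    case True
    define f where "f = (\<lambda>t. e t * exp (- K * t))"
    have "f t \<le> f s"
    proof (rule DERIV_nonpos_imp_nonincreasing[of s t f, OF True])
      fix x
      have "(f has_real_derivative (E x * exp (-K*x) + e x * (exp (-K*x) * (-K)))) (at x)"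
        unfolding f_def by (rule derivative_eq_intros de refl | simp)+
      moreover have "E x * exp (-K*x) + e x * (exp (-K*x) * (-K)) \<le> 0"
      proof -
        have "E x - K * e x \<le> 0" using bnd[of x] by linarith
        then have "(E x - K * e x) * exp (-K*x) \<le> 0" by (simp add: mult_nonpos_nonneg)
        then show ?thesis by (simp add: algebra_simps)
      qed
      ultimately show "\<exists>y. (f has_real_derivative y) (at x) \<and> y \<le> 0" by blast
    qed
    then show ?thesis using es e0[of t] unfolding f_def
      by (smt (verit) exp_gt_zero mult_nonneg_nonneg mult_pos_pos zero_less_mult_iff)
  next
    case False
    define f where "f = (\<lambda>t. e t * exp (K * t))"
    have "f t \<le> f s"
    proof (rule DERIV_nonneg_imp_nondecreasing[of t s f])
      show "t \<le> s" using False by simp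
      fix x
      have "(f has_real_derivative (E x * exp (K*x) + e x * (exp (K*x) * K))) (at x)"
        unfolding f_def by (rule derivative_eq_intros de refl | simp)+
      moreover have "E x * exp (K*x) + e x * (exp (K*x) * K) \<ge> 0"
      proof -
        have "E x + K * e x \<ge> 0" using bnd[of x] by linarith
        then have "(E x + K * e x) * exp (K*x) \<ge> 0" by simp
        then show ?thesis by (simp add: algebra_simps)
      qed
      ultimately show "\<exists>y. (f has_real_derivative y) (at x) \<and> y \<ge> 0" by blast
    qed
    then show ?thesis using es e0[of t] unfolding f_def
      by (smt (verit) exp_gt_zero mult_nonneg_nonneg mult_pos_pos zero_less_mult_iff)
  qed
  then show ?thesis unfolding e_def
    by (smt (verit) sum_power2_eq_zero_iff)
qed



lemma per_int:
  fixes f :: "real \<Rightarrow> 'a" and T t :: real and k :: int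
  assumes "\<forall>t. f (t + T) = f t"
  shows "f (t + of_int k * T) = f t"
proof -
  have pos: "f (t + real n * T) = f t" for n t
  proof (induction n arbitrary: t)
    case (Suc n)
    have "f (t + real (Suc n) * T) = f ((t + real n * T) + T)" by (simp add: algebra_simps)
    also have "\<dots> = f (t + real n * T)" using assms by blast
    finally show ?case using Suc by simp
  qed simp
  show ?thesis
  proof (cases "k \<ge> 0")
    case True
    then have kk: "real (nat k) = of_int k" by simp
    show ?thesis using pos[where n="nat k" and t=t] unfolding kk .
  next
    case False
    then have kk: "real (nat (-k)) = - of_int k" by simp
    have "f ((t + of_int k * T) + real (nat (-k)) * T) = f (t + of_int k * T)"
      by (rule pos)
    then show ?thesis unfolding kk by (simp add: algebra_simps)
  qed
qed

lemma min_period_mult: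
  fixes f :: "real \<Rightarrow> 'a::metric_space"
  assumes cont: "continuous_on UNIV f" and P: "P > 0" and perP: "\<forall>t. f (t + P) = f t"
    and nc: "\<exists>t. f t \<noteq> f 0"
  shows "min_period f > 0 \<and> (\<exists>k::int. P = of_int k * min_period f)"
proof -
  define per where "per = (\<lambda>T. \<forall>t. f (t + T) = f t)"
  define S where "S = {T. T > 0 \<and> per T}"
  define c where "c = Inf S"
  have PS: "P \<in> S" using P perP by (simp add: S_def per_def)
  have bdd: "bdd_below S" unfolding S_def by (rule bdd_belowI[of _ 0]) auto
  have c0: "c \<ge> 0" unfolding c_def using PS by (intro cInf_greatest) (auto simp: S_def)
  have cle: "c \<le> T" if "T \<in> S" for T unfolding c_def using that bdd by (rule cInf_lower)
  have small: "\<exists>T\<in>S. T < c + \<epsilon>" if "\<epsilon> > 0" for \<epsilon>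
    using cInf_less_iff[of S "c + \<epsilon>"] PS bdd that unfolding c_def by auto
  have isCont: "isCont f x" for x using cont by (simp add: continuous_on_eq_continuous_at)
  have cpos: "c > 0"
  proof (rule ccontr)
    assume "\<not> c > 0"
    then have c00: "c = 0" using c0 by simp
    obtain t where t: "f t \<noteq> f 0" using nc by blast
    define e where "e = dist (f t) (f 0)"
    have e: "e > 0" using t by (simp add: e_def)
    obtain \<delta> where \<delta>: "\<delta> > 0" "\<And>s. dist s t < \<delta> \<Longrightarrow> dist (f s) (f t) < e"
      using isCont[of t] e unfolding continuous_at_eps_delta by (metis dist_commute)
    obtain T where T: "T \<in> S" "T < \<delta>" using small[OF \<delta>(1)] c00 by auto
    have Tp: "T > 0" "per T" using T by (auto simp: S_def)
    define k where "k = \<lfloor>t / T\<rfloor>"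
    have k1: "of_int k * T \<le> t"
      using floor_divide_lower[of T t] Tp by (simp add: k_def)
    have k2: "t < of_int k * T + T"
      using floor_divide_upper[of T t] Tp by (simp add: k_def algebra_simps)
    have "f (0 + of_int k * T) = f 0" using per_int[of f T 0 k] Tp by (simp add: per_def)
    moreover have "dist (of_int k * T) t < \<delta>" using k1 k2 T by (simp add: dist_real_def)
    ultimately have "dist (f 0) (f t) < e" using \<delta>(2)[of "of_int k * T"] by simp
    then show False by (simp add: e_def dist_commute)
  qed
  have perc: "per c"
    unfolding per_def
  proof (rule ccontr)
    assume "\<not> (\<forall>t. f (t + c) = f t)"
    then obtain t where t: "f (t + c) \<noteq> f t" by blast
    define e where "e = dist (f (t + c)) (f t)"
    have e: "e > 0" using t by (simp add: e_def)
    obtain \<delta> where \<delta>: "\<delta> > 0" "\<And>s. dist s (t + c) < \<delta> \<Longrightarrow> dist (f s) (f (t + c)) < e"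
      using isCont[of "t + c"] e unfolding continuous_at_eps_delta by (metis dist_commute)
    obtain T where T: "T \<in> S" "T < c + \<delta>" using small[OF \<delta>(1)] by auto
    have "c \<le> T" using cle T by auto
    then have "dist (t + T) (t + c) < \<delta>" using T by (simp add: dist_real_def)
    then have "dist (f (t + T)) (f (t + c)) < e" using \<delta>(2) by blast
    moreover have "f (t + T) = f t" using T by (simp add: S_def per_def)
    ultimately show False by (simp add: e_def dist_commute)
  qed
  have minimal: "\<not> per T" if "0 < T" "T < c" for T
    using cle[of T] that by (auto simp: S_def)
  have mp: "min_period f = c"
    unfolding min_period_def
  proof (rule the_equality)
    show "0 < c \<and> (\<forall>t. f (t + c) = f t) \<and> (\<forall>S. 0 < S \<and> S < c \<longrightarrow> \<not> (\<forall>t. f (t + S) = f t))"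
      using cpos perc minimal unfolding per_def by blast
  next
    fix T assume T: "0 < T \<and> (\<forall>t. f (t + T) = f t) \<and> (\<forall>S. 0 < S \<and> S < T \<longrightarrow> \<not> (\<forall>t. f (t + S) = f t))"
    then have "T \<in> S" by (simp add: S_def per_def)
    then have "c \<le> T" using cle by blast
    moreover have "\<not> c < T" using T cpos perc unfolding per_def by blast
    ultimately show "T = c" by simp
  qed
  define k where "k = \<lfloor>P / c\<rfloor>"
  define r where "r = P - of_int k * c"
  have r0: "r \<ge> 0" using floor_divide_lower[of c P] cpos by (simp add: r_def k_def)
  have r1: "r < c" using floor_divide_upper[of c P] cpos by (simp add: r_def k_def algebra_simps)
  have "per r"
    unfolding per_def
  proof
    fix t
    have "f (t + r) = f ((t + r) + of_int k * c)" using per_int[of f c "t + r" k] perc by (simp add: per_def)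
    also have "\<dots> = f (t + P)" by (simp add: r_def)
    also have "\<dots> = f t" using perP by simp
    finally show "f (t + r) = f t" .
  qed
  then have "r = 0"
  proof (rule contrapos_pp)
    assume "r \<noteq> 0"
    then have "0 < r" using r0 by simp
    then show "\<not> per r" using minimal r1 by blast
  qed
  then have "P = of_int k * c" unfolding r_def by simp
  then show ?thesis using mp cpos by blast
qed



lemma lip_mvt:
  fixes f f' :: "real \<Rightarrow> real"
  assumes der: "\<And>z. \<bar>z\<bar> \<le> M \<Longrightarrow> (f has_real_derivative f' z) (at z)"
    and bnd: "\<And>z. \<bar>z\<bar> \<le> M \<Longrightarrow> \<bar>f' z\<bar> \<le> B"
    and x: "\<bar>x\<bar> \<le> M" and y: "\<bar>y\<bar> \<le> M"
  shows "\<bar>f x - f y\<bar> \<le> B * \<bar>x - y\<bar>"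
proof -
  have main: "\<bar>f b - f a\<bar> \<le> B * \<bar>b - a\<bar>" if ab: "a < b" "\<bar>a\<bar> \<le> M" "\<bar>b\<bar> \<le> M" for a b
  proof -
    have "\<exists>z::real. a < z \<and> z < b \<and> (f b - f a = (b - a) * f' z)"
      by (rule MVT2[OF ab(1)]) (use ab der in auto)
    then obtain z where z: "a < z" "z < b" "f b - f a = (b - a) * f' z" by blast
    have zM: "\<bar>z\<bar> \<le> M" using z ab by auto
    have "\<bar>f b - f a\<bar> = \<bar>b - a\<bar> * \<bar>f' z\<bar>" using z(3) by (simp add: abs_mult)
    also have "\<dots> \<le> \<bar>b - a\<bar> * B" by (intro mult_left_mono bnd zM) simp
    finally show ?thesis by (simp add: mult.commute)
  qed
  show ?thesis
  proof (cases x y rule: linorder_cases)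
    case less then show ?thesis using main[of x y] x y by (simp add: abs_minus_commute)
  next
    case equal then show ?thesis by simp
  next
    case greater then show ?thesis using main[of y x] x y by (simp add: abs_minus_commute)
  qed
qed

lemma refl_lam:
  fixes l pl F :: "real \<Rightarrow> real"
  assumes dl: "\<And>t. (l has_real_derivative pl t) (at t)"
    and dp: "\<And>t. (pl has_real_derivative F (l t)) (at t)"
    and odd: "\<And>x. F (-x) = - F x"
    and lip: "\<And>x y. \<bar>x\<bar> \<le> M \<Longrightarrow> \<bar>y\<bar> \<le> M \<Longrightarrow> \<bar>F x - F y\<bar> \<le> L * \<bar>x - y\<bar>"
    and bd: "\<And>t. \<bar>l t\<bar> \<le> M" and l0: "l s = 0"
  shows "l (2 * s - t) = - l t \<and> pl (2 * s - t) = pl t"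
proof -
  have dd: "((\<lambda>t. 2 * s - t) has_real_derivative -1) (at t)" for t
    by (rule derivative_eq_intros refl | simp)+
  have d1: "((\<lambda>t. - l (2 * s - t)) has_real_derivative pl (2 * s - t)) (at t)" for t
  proof -
    have "((\<lambda>t. l (2 * s - t)) has_real_derivative pl (2 * s - t) * (-1)) (at t)"
      by (rule DERIV_chain2[where f=l, OF dl dd])
    from DERIV_minus[OF this] show ?thesis by simp
  qed
  have d2: "((\<lambda>t. pl (2 * s - t)) has_real_derivative F (- l (2 * s - t))) (at t)" for t
  proof -
    have "((\<lambda>t. pl (2 * s - t)) has_real_derivative F (l (2 * s - t)) * (-1)) (at t)"
      by (rule DERIV_chain2[where f=pl, OF dp dd])
    then show ?thesis by (simp add: odd)
  qed
  have lp: "\<bar>F (l t) - F (- l (2 * s - t))\<bar> \<le> L * \<bar>l t - - l (2 * s - t)\<bar>" for t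
    by (rule lip) (use bd in auto)
  have i1: "l s = - l (2 * s - s)" using l0 by simp
  have i2: "pl s = pl (2 * s - s)" by simp
  have "l (2 * s - t) = - l (2 * s - (2 * s - t)) \<and> pl (2 * s - t) = pl (2 * s - (2 * s - t))"
    using ode_unique[OF dl dp d1 d2 lp i1 i2, of "2 * s - t"] by simp
  then show ?thesis by simp
qed

lemma refl_nu:
  fixes v pv G :: "real \<Rightarrow> real" and s t L :: real
  assumes dl: "\<And>t. (v has_real_derivative pv t) (at t)"
    and dp: "\<And>t. (pv has_real_derivative G (v t)) (at t)"
    and odd: "\<And>x. G (2 * v s - x) = - G x"
    and lip: "\<And>x y. \<bar>G x - G y\<bar> \<le> L * \<bar>x - y\<bar>"
  shows "v (2 * s - t) = 2 * v s - v t \<and> pv (2 * s - t) = pv t"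
proof -
  have dd: "((\<lambda>t. 2 * s - t) has_real_derivative -1) (at t)" for t
    by (rule derivative_eq_intros refl | simp)+
  have d1: "((\<lambda>t. 2 * v s - v (2 * s - t)) has_real_derivative pv (2 * s - t)) (at t)" for t
  proof -
    have "((\<lambda>t. v (2 * s - t)) has_real_derivative pv (2 * s - t) * (-1)) (at t)"
      by (rule DERIV_chain2[where f=v, OF dl dd])
    from DERIV_diff[OF DERIV_const this] show ?thesis by simp
  qed
  have d2: "((\<lambda>t. pv (2 * s - t)) has_real_derivative G (2 * v s - v (2 * s - t))) (at t)" for t
  proof -
    have "((\<lambda>t. pv (2 * s - t)) has_real_derivative G (v (2 * s - t)) * (-1)) (at t)"
      by (rule DERIV_chain2[where f=pv, OF dp dd])
    then show ?thesis by (simp add: odd)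
  qed
  have lp: "\<bar>G (v t) - G (2 * v s - v (2 * s - t))\<bar> \<le> L * \<bar>v t - (2 * v s - v (2 * s - t))\<bar>" for t
    by (rule lip)
  have i1: "v s = 2 * v s - v (2 * s - s)" by simp
  have i2: "pv s = pv (2 * s - s)" by simp
  have "v (2 * s - t) = 2 * v s - v (2 * s - (2 * s - t)) \<and> pv (2 * s - t) = pv (2 * s - (2 * s - t))"
    using ode_unique[OF dl dp d1 d2 lp i1 i2, of "2 * s - t"] by simp
  then show ?thesis by simp
qed



lemma DERIV_cosh_real: "DERIV cosh (x::real) :> sinh x"
  unfolding sinh_def cosh_def by (auto intro!: derivative_eq_intros)

lemma Hlam_deriv0: "(Hlam d m1 m2 h has_derivative (\<lambda>_. 0)) (at (0, 0))"
proof -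
  have eq: "Hlam d m1 m2 h = (\<lambda>x. (1/2) * (snd x)^2 - d*(m1+m2)*cosh (fst x) - h*d^2*(cosh (fst x))^2)"
    by (simp add: Hlam_def fun_eq_iff split_def)
  have c: "((\<lambda>x. cosh (fst x)) has_derivative (\<lambda>y. fst y * sinh (fst (0::real, 0::real)))) (at (0::real, 0::real))"
    by (rule DERIV_compose_FDERIV[OF DERIV_cosh_real]) (rule derivative_intros has_derivative_ident)+
  then have c': "((\<lambda>x. cosh (fst x)) has_derivative (\<lambda>y. 0)) (at (0::real, 0::real))" by simp
  show ?thesis unfolding eq
    by (rule has_derivative_eq_rhs, (rule derivative_eq_intros c' | simp)+)
qed

lemma Hnu_deriv0:
  assumes "cos a = 0"
  shows "(Hnu d m1 m2 h has_derivative (\<lambda>_. 0)) (at (a, 0))"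
proof -
  have eq: "Hnu d m1 m2 h = (\<lambda>x. (1/2) * (snd x)^2 + d * (m1 - m2) * sin (fst x) + h * d^2 * (sin (fst x))^2)"
    by (simp add: Hnu_def fun_eq_iff split_def)
  show ?thesis unfolding eq
    by (rule has_derivative_eq_rhs, (rule derivative_eq_intros | simp)+) (auto simp: fun_eq_iff assms)
qed

lemma coll_facts:
  assumes "collision l v"
  shows "l = 0 \<and> cos v = 0 \<and> (\<exists>n::int. 2 * v = pi + 2 * pi * of_int n)"
proof -
  obtain k :: int where k: "v = pi/2 + 2 * pi * k \<or> v = - pi/2 + 2 * pi * k" and l: "l = 0"
    using assms by (auto simp: collision_def)
  have "\<exists>n::int. v = of_int n * pi + pi/2"
  proof (cases "v = pi/2 + 2 * pi * k")
    case True then show ?thesis by (intro exI[of _ "2*k"]) (simp add: algebra_simps)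
  next
    case False then have "v = - pi/2 + 2 * pi * k" using k by simp
    then show ?thesis by (intro exI[of _ "2*k - 1"]) (simp add: algebra_simps)
  qed
  then obtain n :: int where n: "v = of_int n * pi + pi/2" by blast
  then have "cos v = 0" using cos_zero_iff_int2 by blast
  moreover have "2 * v = pi + 2 * pi * of_int n" using n by (simp add: algebra_simps)
  ultimately show ?thesis using l by blast
qed

lemma cos_sin_c:
  assumes "c = pi + 2 * pi * of_int n"
  shows "cos c = -1 \<and> sin c = 0"
  using assms by (simp add: cos_add sin_add)

lemma cos_sin_per:
  "cos (x + 2 * pi * of_int n) = cos x \<and> sin (x + 2 * pi * of_int n) = sin x"
  by (simp add: cos_add sin_add)



lemma cosh_le_expM: "\<bar>z::real\<bar> \<le> M \<Longrightarrow> cosh z \<le> exp M"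
proof -
  assume z: "\<bar>z\<bar> \<le> M"
  have "exp z \<le> exp M" "exp (-z) \<le> exp M" using z by auto
  then have "exp z + exp (-z) \<le> 2 * exp M" by linarith
  then show ?thesis by (simp add: cosh_def)
qed

lemma abs_sinh_le_cosh: "\<bar>sinh (z::real)\<bar> \<le> cosh z"
  using sinh_le_cosh_real[of z] sinh_le_cosh_real[of "-z"] by (simp add: abs_le_iff)

theorem corollary3:
  fixes d m1 m2 h g \<tau>1 \<tau>2 :: real
    and Cl :: "(real \<times> real) set" and Cn :: "(real \<times> real \<times> real) set"
    and l pl v pv :: "real \<Rightarrow> real"
  assumes "d > 0" and "m1 > 0" and "m2 > 0" and "h < 0"
    and "regular_value (Hlam d m1 m2 h) (- g)"
    and "regular_value (Hnu d m1 m2 h) g"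
    and "Cl \<in> components {x. Hlam d m1 m2 h x = - g}" and "compact Cl"
    and "Cn \<in> components (cyl_map ` {x. Hnu d m1 m2 h x = g})" and "compact Cn"
    and "reg_orbit d m1 m2 h l pl v pv"
    and "\<forall>\<tau>. (l \<tau>, pl \<tau>) \<in> Cl \<and> cyl_map (v \<tau>, pv \<tau>) \<in> Cn"
    and "\<tau>1 \<noteq> \<tau>2"
    and "collision (l \<tau>1) (v \<tau>1)" and "collision (l \<tau>2) (v \<tau>2)"
  shows "rot_number l pl v pv \<in> \<rat>"
proof -
  define F where "F = (\<lambda>x::real. d * (m1 + m2) * sinh x + 2 * h * d^2 * cosh x * sinh x)"
  define G where "G = (\<lambda>x::real. - d * (m1 - m2) * cos x - 2 * h * d^2 * sin x * cos x)"
  have dl: "\<And>t. (l has_real_derivative pl t) (at t)"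
    and dpl: "\<And>t. (pl has_real_derivative F (l t)) (at t)"
    and dv: "\<And>t. (v has_real_derivative pv t) (at t)"
    and dpv: "\<And>t. (pv has_real_derivative G (v t)) (at t)"
    using assms(11) unfolding reg_orbit_def F_def G_def by auto
  have inCl: "(l t, pl t) \<in> Cl" and inCn: "cyl_map (v t, pv t) \<in> Cn" for t
    using assms(12) by auto
  have "bounded Cl" using compact_imp_bounded assms(8) by blast
  then obtain M where M: "\<And>x. x \<in> Cl \<Longrightarrow> norm x \<le> M" by (auto simp: bounded_iff)
  have lb: "\<bar>l t\<bar> \<le> M" for t
    using norm_fst_le[of "l t" "pl t"] M[OF inCl[of t]] by simp
  define F' where "F' = (\<lambda>z::real. d * (m1 + m2) * cosh z + 2 * h * d^2 * (sinh z * sinh z + cosh z * cosh z))"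
  define BF where "BF = \<bar>d * (m1 + m2)\<bar> * exp M + \<bar>2 * h * d^2\<bar> * (2 * (exp M * exp M))"
  have dF: "(F has_real_derivative F' z) (at z)" for z
    unfolding F_def F'_def
    by (rule derivative_eq_intros DERIV_cosh_real refl | simp)+ (simp add: algebra_simps)
  have bF: "\<bar>F' z\<bar> \<le> BF" if z: "\<bar>z\<bar> \<le> M" for z
  proof -
    have c1: "cosh z \<le> exp M" by (rule cosh_le_expM[OF z])
    have c0: "cosh z \<ge> 0" by (simp add: cosh_real_nonneg)
    have s1: "\<bar>sinh z\<bar> \<le> exp M" using abs_sinh_le_cosh[of z] c1 by linarith
    have "\<bar>sinh z * sinh z + cosh z * cosh z\<bar> \<le> \<bar>sinh z\<bar> * \<bar>sinh z\<bar> + \<bar>cosh z\<bar> * \<bar>cosh z\<bar>"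
      by (simp add: abs_mult[symmetric] abs_triangle_ineq)
    also have "\<dots> \<le> exp M * exp M + exp M * exp M"
      using s1 c1 c0 by (intro add_mono mult_mono) auto
    finally have q: "\<bar>sinh z * sinh z + cosh z * cosh z\<bar> \<le> 2 * (exp M * exp M)" by simp
    have "\<bar>F' z\<bar> \<le> \<bar>d * (m1 + m2)\<bar> * \<bar>cosh z\<bar> + \<bar>2 * h * d^2\<bar> * \<bar>sinh z * sinh z + cosh z * cosh z\<bar>"
      unfolding F'_def by (rule order_trans[OF abs_triangle_ineq]) (simp only: abs_mult order_refl)
    also have "\<dots> \<le> BF" unfolding BF_def
      using q c1 c0 by (intro add_mono mult_left_mono) auto
    finally show ?thesis .
  qed
  have lipF: "\<bar>F x - F y\<bar> \<le> BF * \<bar>x - y\<bar>" if "\<bar>x\<bar> \<le> M" "\<bar>y\<bar> \<le> M" for x y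
    by (rule lip_mvt[OF dF bF that])
  define G' where "G' = (\<lambda>z::real. d * (m1 - m2) * sin z - 2 * h * d^2 * (cos z * cos z - sin z * sin z))"
  define BG where "BG = \<bar>d * (m1 - m2)\<bar> * 1 + \<bar>2 * h * d^2\<bar> * 2"
  have dG: "(G has_real_derivative G' z) (at z)" for z
    unfolding G_def G'_def
    by (rule derivative_eq_intros refl | simp)+ (simp add: algebra_simps)
  have bG: "\<bar>G' z\<bar> \<le> BG" for z
  proof -
    have "\<bar>cos z * cos z - sin z * sin z\<bar> \<le> \<bar>cos z\<bar> * \<bar>cos z\<bar> + \<bar>sin z\<bar> * \<bar>sin z\<bar>"
      by (rule order_trans[OF abs_triangle_ineq4]) (simp only: abs_mult order_refl)
    also have "\<dots> \<le> 1 * 1 + 1 * 1" by (intro add_mono mult_mono) auto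
    finally have q: "\<bar>cos z * cos z - sin z * sin z\<bar> \<le> 2" by simp
    have "\<bar>G' z\<bar> \<le> \<bar>d * (m1 - m2)\<bar> * \<bar>sin z\<bar> + \<bar>2 * h * d^2\<bar> * \<bar>cos z * cos z - sin z * sin z\<bar>"
      unfolding G'_def by (rule order_trans[OF abs_triangle_ineq4]) (simp only: abs_mult order_refl)
    also have "\<dots> \<le> BG" unfolding BG_def
      using q by (intro add_mono mult_left_mono) auto
    finally show ?thesis .
  qed
  have lipG: "\<bar>G x - G y\<bar> \<le> BG * \<bar>x - y\<bar>" for x y
    by (rule lip_mvt[where M="max \<bar>x\<bar> \<bar>y\<bar>", OF dG bG]) auto
  have oddF: "F (-x) = - F x" for x by (simp add: F_def)
  have RL: "l (2 * s - t) = - l t \<and> pl (2 * s - t) = pl t" if "collision (l s) (v s)" for s t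
    using refl_lam[OF dl dpl oddF lipF lb] coll_facts[OF that] by blast
  have RV: "v (2 * s - t) = 2 * v s - v t \<and> pv (2 * s - t) = pv t" if cs0: "collision (l s) (v s)" for s t
  proof -
    obtain n :: int where n: "2 * v s = pi + 2 * pi * of_int n" using coll_facts[OF cs0] by blast
    have cs: "cos (2 * v s) = -1" "sin (2 * v s) = 0" using cos_sin_c[OF n] by auto
    have oddG: "G (2 * v s - x) = - G x" for x
      by (simp add: G_def cos_diff sin_diff cs)
    show ?thesis by (rule refl_nu[OF dv dpv oddG lipG])
  qed
  have PL: "(l (t + 2 * (s2 - s1)), pl (t + 2 * (s2 - s1))) = (l t, pl t)"
    if c1: "collision (l s1) (v s1)" and c2: "collision (l s2) (v s2)" for s1 s2 t
  proof -
    have e: "t + 2 * (s2 - s1) = 2 * s2 - (2 * s1 - t)" by simp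
    show ?thesis unfolding e using RL[OF c2, of "2 * s1 - t"] RL[OF c1, of t] by simp
  qed
  have PV: "cyl_map (v (t + 2 * (s2 - s1)), pv (t + 2 * (s2 - s1))) = cyl_map (v t, pv t)"
    if c1: "collision (l s1) (v s1)" and c2: "collision (l s2) (v s2)" for s1 s2 t
  proof -
    obtain n1 :: int where n1: "2 * v s1 = pi + 2 * pi * of_int n1" using coll_facts[OF c1] by blast
    obtain n2 :: int where n2: "2 * v s2 = pi + 2 * pi * of_int n2" using coll_facts[OF c2] by blast
    have e: "t + 2 * (s2 - s1) = 2 * s2 - (2 * s1 - t)" by simp
    have "v (t + 2 * (s2 - s1)) = 2 * v s2 - (2 * v s1 - v t)"
      unfolding e using RV[OF c2, of "2 * s1 - t"] RV[OF c1, of t] by simp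
    also have "\<dots> = v t + 2 * pi * of_int (n2 - n1)" using n1 n2 by (simp add: algebra_simps)
    finally have ve: "v (t + 2 * (s2 - s1)) = v t + 2 * pi * of_int (n2 - n1)" .
    have pe: "pv (t + 2 * (s2 - s1)) = pv t"
      unfolding e using RV[OF c2, of "2 * s1 - t"] RV[OF c1, of t] by simp
    show ?thesis unfolding cyl_map_def using ve pe cos_sin_per[of "v t" "n2 - n1"] by simp
  qed
  define P where "P = 2 * \<bar>\<tau>2 - \<tau>1\<bar>"
  have P0: "P > 0" using assms(13) by (simp add: P_def)
  have perL: "\<forall>t. (l (t + P), pl (t + P)) = (l t, pl t)"
  proof
    fix t
    show "(l (t + P), pl (t + P)) = (l t, pl t)"
    proof (cases "\<tau>1 \<le> \<tau>2")
      case True then have "P = 2 * (\<tau>2 - \<tau>1)" by (simp add: P_def)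
      then show ?thesis using PL[OF assms(14) assms(15)] by simp
    next
      case False then have "P = 2 * (\<tau>1 - \<tau>2)" by (simp add: P_def)
      then show ?thesis using PL[OF assms(15) assms(14)] by simp
    qed
  qed
  have perN: "\<forall>t. cyl_map (v (t + P), pv (t + P)) = cyl_map (v t, pv t)"
  proof
    fix t
    show "cyl_map (v (t + P), pv (t + P)) = cyl_map (v t, pv t)"
    proof (cases "\<tau>1 \<le> \<tau>2")
      case True then have "P = 2 * (\<tau>2 - \<tau>1)" by (simp add: P_def)
      then show ?thesis using PV[OF assms(14) assms(15)] by simp
    next
      case False then have "P = 2 * (\<tau>1 - \<tau>2)" by (simp add: P_def)
      then show ?thesis using PV[OF assms(15) assms(14)] by simp
    qed
  qed
  have cl: "continuous_on UNIV l" "continuous_on UNIV pl" "continuous_on UNIV v" "continuous_on UNIV pv"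
    using DERIV_isCont[OF dl] DERIV_isCont[OF dpl] DERIV_isCont[OF dv] DERIV_isCont[OF dpv]
    by (auto intro!: continuous_at_imp_continuous_on)
  have contL: "continuous_on UNIV (\<lambda>t. (l t, pl t))"
    using cl by (intro continuous_intros) auto
  have cyl_eq: "(\<lambda>t. cyl_map (v t, pv t)) = (\<lambda>t. (cos (v t), sin (v t), pv t))"
    by (simp add: cyl_map_def fun_eq_iff)
  have contN: "continuous_on UNIV (\<lambda>t. cyl_map (v t, pv t))"
    unfolding cyl_eq using cl by (intro continuous_intros) auto
  obtain n1 :: int where cc1: "l \<tau>1 = 0" "cos (v \<tau>1) = 0" using coll_facts[OF assms(14)] by blast
  have ncL: "\<exists>t. (l t, pl t) \<noteq> (l 0, pl 0)"
  proof (rule ccontr)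
    assume "\<not> (\<exists>t. (l t, pl t) \<noteq> (l 0, pl 0))"
    then have "l = (\<lambda>_. l 0)" by (auto simp: fun_eq_iff)
    then have "(l has_real_derivative 0) (at \<tau>1)" by (metis DERIV_const)
    then have p0: "pl \<tau>1 = 0" using DERIV_unique[OF dl] by blast
    have "(0, 0) \<in> Cl" using inCl[of \<tau>1] cc1 p0 by simp
    then have "Hlam d m1 m2 h (0, 0) = - g" using in_components_subset[OF assms(7)] by blast
    then obtain D where D: "(Hlam d m1 m2 h has_derivative D) (at (0, 0))" "D \<noteq> (\<lambda>_. 0)"
      using assms(5) unfolding regular_value_def by blast
    from has_derivative_unique[OF D(1) Hlam_deriv0] D(2) show False by simp
  qed
  have ncN: "\<exists>t. cyl_map (v t, pv t) \<noteq> cyl_map (v 0, pv 0)"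
  proof (rule ccontr)
    assume "\<not> (\<exists>t. cyl_map (v t, pv t) \<noteq> cyl_map (v 0, pv 0))"
    then have "\<forall>t. cyl_map (v t, pv t) = cyl_map (v 0, pv 0)" by blast
    then have "\<forall>t. cos (v t) = cos (v 0)" by (simp add: cyl_map_def)
    then have "(\<lambda>t. cos (v t)) = (\<lambda>_. cos (v 0))" by (simp add: fun_eq_iff)
    then have d0: "((\<lambda>t. cos (v t)) has_real_derivative 0) (at \<tau>1)" by (metis DERIV_const)
    have d1: "((\<lambda>t. cos (v t)) has_real_derivative (- sin (v \<tau>1) * pv \<tau>1)) (at \<tau>1)"
      using DERIV_chain2[OF DERIV_cos dv] by simp
    have z: "sin (v \<tau>1) * pv \<tau>1 = 0" using DERIV_unique[OF d0 d1] by simp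
    have "sin (v \<tau>1)^2 = 1" using sin_cos_squared_add[of "v \<tau>1"] cc1 by simp
    then have "sin (v \<tau>1) \<noteq> 0" by auto
    then have p0: "pv \<tau>1 = 0" using z by simp
    have "cyl_map (v \<tau>1, pv \<tau>1) \<in> cyl_map ` {x. Hnu d m1 m2 h x = g}"
      using inCn[of \<tau>1] in_components_subset[OF assms(9)] by blast
    then obtain a b where ab: "Hnu d m1 m2 h (a, b) = g" "cyl_map (a, b) = cyl_map (v \<tau>1, pv \<tau>1)" by auto
    then have "sin a = sin (v \<tau>1)" "b = pv \<tau>1" by (auto simp: cyl_map_def)
    then have "Hnu d m1 m2 h (v \<tau>1, 0) = g" using ab(1) p0 by (simp add: Hnu_def)
    then obtain D where D: "(Hnu d m1 m2 h has_derivative D) (at (v \<tau>1, 0))" "D \<noteq> (\<lambda>_. 0)"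
      using assms(6) unfolding regular_value_def by blast
    from has_derivative_unique[OF D(1) Hnu_deriv0[OF cc1(2)]] D(2) show False by simp
  qed
  have mL: "min_period (\<lambda>t. (l t, pl t)) > 0 \<and> (\<exists>k::int. P = of_int k * min_period (\<lambda>t. (l t, pl t)))"
    by (rule min_period_mult) (use contL P0 perL ncL in auto)
  have mN: "min_period (\<lambda>t. cyl_map (v t, pv t)) > 0 \<and> (\<exists>k::int. P = of_int k * min_period (\<lambda>t. cyl_map (v t, pv t)))"
    by (rule min_period_mult) (use contN P0 perN ncN in auto)
  define TL where "TL = min_period (\<lambda>t. (l t, pl t))"
  define TN where "TN = min_period (\<lambda>t. cyl_map (v t, pv t))"
  obtain kL :: int where kL: "P = of_int kL * TL" and TL0: "TL > 0" using mL unfolding TL_def by blast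
  obtain kN :: int where kN: "P = of_int kN * TN" and TN0: "TN > 0" using mN unfolding TN_def by blast
  have kN0: "of_int kN \<noteq> (0::real)" using kN P0 by auto
  have "rot_number l pl v pv = TN / TL" unfolding rot_number_def TN_def TL_def by simp
  also have "\<dots> = of_int kL / of_int kN"
    using kL kN kN0 TL0 TN0 by (simp add: field_simps)
  finally show ?thesis by (simp add: Rats_divide)
qed


end
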